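(* Define $$\mathcal{R}_0=\sqrt{\dfrac{S^0_v}{\mu_v}\int_0^\infty \int_0^\infty \beta_h(\xi+s)\beta_v(\xi)s^0_h(\xi)e^{-\int_\xi^{\xi+s}(\mu_h(u)+r_1(u)+\delta(u))du}\,d\xi\, ds},$$ where $s_h^0(a)=\Lambda_h\exp\left(-\int_0^a\mu_h(s)ds\right)$ and $S_v^0=\Lambda_v/\mu_v$ are the components of the parasite-free equilibrium $E_0=(s_h^0,0,0,S_v^0,0)$. Then $\mathcal{R}_0$ is the basic reproduction number of the age-structured malaria model below; namely, $\mathcal{R}_0$ equals the spectral radius of the next generation operator $K:L^1(0,\infty)\times\mathbb{R}\to L^1(0,\infty)\times\mathbb{R}$, $$K\begin{pmatrix}B_1\\ B_2\end{pmatrix}=\begin{pmatrix}\dfrac{\beta_v s_h^0 B_2}{\mu_v}\\[2mm] S_v^0\int_0^\infty\int_0^\infty \beta_h(\xi+s)B_1(\xi)e^{-\int_\xi^{\xi+s}(\mu_h(u)+\delta(u)+r_1(u))du}\,d\xi\, ds\end{pmatrix},$$ obtained from the linearisation of the model at $E_0$.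
   Context: The model is the age-structured SIRS (humans) / SI (mosquitoes) malaria system, for $t>0$, $a\ge 0$: $(\partial_t+\partial_a)s_h=-\lambda_h s_h-\mu_h(a)s_h+r_2(a)r_h$, $(\partial_t+\partial_a)i_h=\lambda_h s_h-(\mu_h(a)+\delta(a)+r_1(a))i_h$, $(\partial_t+\partial_a)r_h=r_1(a)i_h-(r_2(a)+\mu_h(a))r_h$, $S_v'=\Lambda_v-\lambda_v S_v-\mu_v S_v$, $I_v'=\lambda_v S_v-\mu_v I_v$, with boundary condition $(s_h,i_h,r_h)(t,0)=(\Lambda_h,0,0)$ and forces of infection $\lambda_h(t,a)=\beta_v(a)I_v(t)$, $\lambda_v(t)=\int_0^\infty\beta_h(a)i_h(t,a)da$. Assumptions: there is $\mu_0>0$ with $\mu_h(a)\ge\mu_0$ a.e. and $\mu_v\ge\mu_0$; $\Lambda_h,\Lambda_v,\mu_v>0$; $\beta_v,\beta_h,\mu_h,\delta,r_1,r_2\in L^\infty_+(0,\infty)$; and $\int_0^\infty\int_0^\infty\beta_h(a+s)\beta_v(a)e^{-\mu_0(a+s)}\,da\,ds>0$. *)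

theory Defs
  imports "HOL-Analysis.Analysis"
begin

text \<open>Elements of the complexified state space L^1(0,inf) x C are represented by pairs
  (B1, B2) with B1 :: real => complex Lebesgue integrable on [0,inf); two such pairs
  represent the same element iff B1 agree a.e. on [0,inf) and the scalars agree.\<close>

definition L1R :: "((real \<Rightarrow> complex) \<times> complex) set" where
  "L1R = {(f, c). set_integrable lborel {0..} f}"

definition L1R_eq :: "(real \<Rightarrow> complex) \<times> complex \<Rightarrow> (real \<Rightarrow> complex) \<times> complex \<Rightarrow> bool" where
  "L1R_eq p q \<longleftrightarrow> (AE x in lborel. x \<ge> 0 \<longrightarrow> fst p x = fst q x) \<and> snd p = snd q"

definition shift_op ::
  "complex \<Rightarrow> ((real \<Rightarrow> complex) \<times> complex \<Rightarrow> (real \<Rightarrow> complex) \<times> complex)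
     \<Rightarrow> (real \<Rightarrow> complex) \<times> complex \<Rightarrow> (real \<Rightarrow> complex) \<times> complex" where
  "shift_op l K p = ((\<lambda>x. l * fst p x - fst (K p) x), l * snd p - snd (K p))"

text \<open>Spectrum: l is in the spectrum iff l I - K is not bijective on L^1 x C
  (bounded inverse is then automatic by the open mapping theorem).\<close>
definition in_spectrum ::
  "((real \<Rightarrow> complex) \<times> complex \<Rightarrow> (real \<Rightarrow> complex) \<times> complex) \<Rightarrow> complex \<Rightarrow> bool" where
  "in_spectrum K l \<longleftrightarrow>
     \<not> ((\<forall>p\<in>L1R. L1R_eq (shift_op l K p) ((\<lambda>_. 0), 0) \<longrightarrow> L1R_eq p ((\<lambda>_. 0), 0)) \<and>
        (\<forall>g\<in>L1R. \<exists>p\<in>L1R. L1R_eq (shift_op l K p) g))"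

definition spectral_radius ::
  "((real \<Rightarrow> complex) \<times> complex \<Rightarrow> (real \<Rightarrow> complex) \<times> complex) \<Rightarrow> real" where
  "spectral_radius K = Sup (cmod ` {l. in_spectrum K l})"

definition Linf_plus :: "(real \<Rightarrow> real) \<Rightarrow> bool" where
  "Linf_plus f \<longleftrightarrow> f \<in> borel_measurable lborel \<and>
     (\<exists>C. AE a in lborel. a \<ge> 0 \<longrightarrow> 0 \<le> f a \<and> f a \<le> C)"

definition s0h :: "real \<Rightarrow> (real \<Rightarrow> real) \<Rightarrow> real \<Rightarrow> real" where
  "s0h Lh muh a = Lh * exp (- (LBINT s:{0..a}. muh s))"

definition Gam :: "(real \<Rightarrow> real) \<Rightarrow> (real \<Rightarrow> real) \<Rightarrow> (real \<Rightarrow> real) \<Rightarrow> real \<Rightarrow> real \<Rightarrow> real" where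
  "Gam muh r1 delta xi s = exp (- (LBINT u:{xi..xi+s}. muh u + r1 u + delta u))"

definition R0 :: "real \<Rightarrow> real \<Rightarrow> real \<Rightarrow> (real \<Rightarrow> real) \<Rightarrow> (real \<Rightarrow> real) \<Rightarrow> (real \<Rightarrow> real)
   \<Rightarrow> (real \<Rightarrow> real) \<Rightarrow> (real \<Rightarrow> real) \<Rightarrow> real" where
  "R0 Lh Lv muv muh betah betav r1 delta =
     sqrt ((Lv / muv) / muv *
       (LBINT s:{0..}. LBINT xi:{0..}.
          betah (xi + s) * betav xi * s0h Lh muh xi * Gam muh r1 delta xi s))"

definition next_gen_op :: "real \<Rightarrow> real \<Rightarrow> real \<Rightarrow> (real \<Rightarrow> real) \<Rightarrow> (real \<Rightarrow> real) \<Rightarrow> (real \<Rightarrow> real)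
   \<Rightarrow> (real \<Rightarrow> real) \<Rightarrow> (real \<Rightarrow> real)
   \<Rightarrow> (real \<Rightarrow> complex) \<times> complex \<Rightarrow> (real \<Rightarrow> complex) \<times> complex" where
  "next_gen_op Lh Lv muv muh betah betav r1 delta p =
     ((\<lambda>a. complex_of_real (betav a * s0h Lh muh a / muv) * snd p),
      complex_of_real (Lv / muv) *
        (LINT s:{0..}|lborel. LINT xi:{0..}|lborel.
           complex_of_real (betah (xi + s) * Gam muh r1 delta xi s) * fst p xi))"

end

theory Submission
  imports Defs
begin


lemma exp_integrable: 
  fixes a :: real assumes "a > 0"
  shows "set_integrable lborel {0..} (\<lambda>x. exp (- a * x))"
proof -
  have "(\<lambda>x. exp (- a * x)) absolutely_integrable_on {0..}"
    apply (rule nonnegative_absolutely_integrable_1)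
     apply (rule integrable_on_exp_minus_to_infinity[OF assms])
    apply simp done
  then show ?thesis
    unfolding set_integrable_def
    by (subst (asm) integrable_completion) auto
qed

lemma AE_shift:
  fixes s :: real
  assumes "AE x in lborel. P x"
  shows "AE x in lborel. P (x + s)"
proof -
  have "AE x in distr lborel borel ((+) s). P x" unfolding lborel_distr_plus using assms .
  then have "AE x in lborel. P (s + x)" by (rule AE_distrD[rotated]) simp
  then show ?thesis by (simp add: add.commute)
qed



lemma int_lower:
  fixes k :: "real \<Rightarrow> real"
  assumes [measurable]: "k \<in> borel_measurable borel"
    and bnd: "AE a in lborel. a \<ge> 0 \<longrightarrow> m \<le> k a \<and> k a \<le> C" and x: "x \<ge> 0" and t: "t \<ge> 0"
  shows "m * t \<le> (LBINT u:{x..x+t}. k u)"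
proof -
  have AEA: "AE u in lborel. u \<in> {x..x+t} \<longrightarrow> m \<le> k u \<and> k u \<le> C"
    using bnd by eventually_elim (use x in auto)
  have i1: "set_integrable lborel {x..x+t} k"
    unfolding set_integrable_def
    apply (rule integrableI_bounded_set_indicator[where B="max \<bar>m\<bar> \<bar>C\<bar>"])
    using AEA t by (auto elim!: eventually_mono)
  have i2: "set_integrable lborel {x..x+t} (\<lambda>_. m)"
    unfolding set_integrable_def
    apply (rule integrableI_bounded_set_indicator[where B="\<bar>m\<bar>"])
    using t by auto
  have "(LBINT u:{x..x+t}. m) = m * t"
    using t by (subst set_integral_const) (auto simp: measure_def)
  moreover have "(LBINT u:{x..x+t}. m) \<le> (LBINT u:{x..x+t}. k u)"
    by (rule set_integral_mono_AE[OF i2 i1]) (use AEA in \<open>auto elim!: eventually_mono\<close>)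
  ultimately show ?thesis by simp
qed

lemma int_nonneg_AE:
  fixes k :: "real \<Rightarrow> real"
  assumes "AE a in lborel. a \<ge> 0 \<longrightarrow> 0 \<le> k a" and x: "x \<ge> 0"
  shows "0 \<le> (LBINT u:{x..x+t}. k u)"
  unfolding set_lebesgue_integral_def
  by (rule integral_nonneg_AE) (use assms in \<open>auto elim!: eventually_mono split: split_indicator\<close>)



locale mal =
  fixes Lh Lv muv mu0 :: real and muh betah betav delta r1 :: "real \<Rightarrow> real"
  assumes mu0: "mu0 > 0" and muh_ge: "AE a in lborel. a \<ge> 0 \<longrightarrow> muh a \<ge> mu0"
    and Lh: "Lh > 0" and Lv: "Lv > 0" and muv: "muv > 0"
    and Lbv: "Linf_plus betav" and Lbh: "Linf_plus betah" and Lmuh: "Linf_plus muh"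
    and Ldelta: "Linf_plus delta" and Lr1: "Linf_plus r1"
    and posint: "(LBINT s:{0..}. LBINT a:{0..}. betah (a + s) * betav a * exp (- mu0 * (a + s))) > 0"
begin

lemma meas[measurable]: "betah \<in> borel_measurable borel" "betav \<in> borel_measurable borel"
  "muh \<in> borel_measurable borel" "delta \<in> borel_measurable borel" "r1 \<in> borel_measurable borel"
  using Lbv Lbh Lmuh Ldelta Lr1 by (auto simp: Linf_plus_def)

lemma G_meas_borel: "(\<lambda>p. Gam muh r1 delta (fst p) (snd p)) \<in> borel_measurable borel"
proof -
  have "(\<lambda>(x,s). LBINT u:{x..x+s}. muh u + r1 u + delta u) \<in> borel_measurable (lborel \<Otimes>\<^sub>M lborel)"
    unfolding set_lebesgue_integral_def indicator_def atLeastAtMost_iff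
    by measurable
  then have "(\<lambda>p. LBINT u:{fst p..fst p+snd p}. muh u + r1 u + delta u) \<in> borel_measurable (borel \<Otimes>\<^sub>M borel)"
    by (simp add: case_prod_beta' cong: measurable_cong_sets)
  then have "(\<lambda>p. LBINT u:{fst p..fst p+snd p}. muh u + r1 u + delta u) \<in> borel_measurable borel"
    by (simp add: borel_prod)
  then show ?thesis unfolding Gam_def by measurable
qed

lemma G_meas[measurable (raw)]:
  assumes "f \<in> borel_measurable M" "g \<in> borel_measurable M"
  shows "(\<lambda>x. Gam muh r1 delta (f x) (g x)) \<in> borel_measurable M"
proof -
  have "(\<lambda>x. (f x, g x)) \<in> measurable M borel"
    using assms by (simp add: borel_prod[symmetric])
  from measurable_compose[OF this G_meas_borel] show ?thesis by simp
qed

lemma s0h_meas[measurable]: "s0h Lh muh \<in> borel_measurable borel"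
proof -
  have "(\<lambda>a. LBINT u:{0..a}. muh u) \<in> borel_measurable borel"
    unfolding set_lebesgue_integral_def indicator_def atLeastAtMost_iff
    by measurable
  then show ?thesis unfolding s0h_def[abs_def] by measurable
qed

end


context mal begin

lemma bnds: obtains Bh Bv Cm Cr Cd where
  "AE a in lborel. a \<ge> 0 \<longrightarrow> 0 \<le> betah a \<and> betah a \<le> Bh"
  "AE a in lborel. a \<ge> 0 \<longrightarrow> 0 \<le> betav a \<and> betav a \<le> Bv"
  "AE a in lborel. a \<ge> 0 \<longrightarrow> 0 \<le> muh a \<and> muh a \<le> Cm"
  "AE a in lborel. a \<ge> 0 \<longrightarrow> 0 \<le> r1 a \<and> r1 a \<le> Cr"
  "AE a in lborel. a \<ge> 0 \<longrightarrow> 0 \<le> delta a \<and> delta a \<le> Cd"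
proof -
  from Lbh obtain Bh where 1: "AE a in lborel. a \<ge> 0 \<longrightarrow> 0 \<le> betah a \<and> betah a \<le> Bh"
    unfolding Linf_plus_def by blast
  from Lbv obtain Bv where 2: "AE a in lborel. a \<ge> 0 \<longrightarrow> 0 \<le> betav a \<and> betav a \<le> Bv"
    unfolding Linf_plus_def by blast
  from Lmuh obtain Cm where 3: "AE a in lborel. a \<ge> 0 \<longrightarrow> 0 \<le> muh a \<and> muh a \<le> Cm"
    unfolding Linf_plus_def by blast
  from Lr1 obtain Cr where 4: "AE a in lborel. a \<ge> 0 \<longrightarrow> 0 \<le> r1 a \<and> r1 a \<le> Cr"
    unfolding Linf_plus_def by blast
  from Ldelta obtain Cd where 5: "AE a in lborel. a \<ge> 0 \<longrightarrow> 0 \<le> delta a \<and> delta a \<le> Cd"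
    unfolding Linf_plus_def by blast
  show ?thesis using that[OF 1 2 3 4 5] .
qed

lemma G_bnd: assumes "x \<ge> 0" "s \<ge> 0"
  shows "0 < Gam muh r1 delta x s \<and> Gam muh r1 delta x s \<le> exp (- mu0 * s)"
proof -
  obtain Bh Bv Cm Cr Cd where b: "AE a in lborel. a \<ge> 0 \<longrightarrow> 0 \<le> muh a \<and> muh a \<le> Cm"
    "AE a in lborel. a \<ge> 0 \<longrightarrow> 0 \<le> r1 a \<and> r1 a \<le> Cr"
    "AE a in lborel. a \<ge> 0 \<longrightarrow> 0 \<le> delta a \<and> delta a \<le> Cd" by (rule bnds)
  have ae: "AE a in lborel. a \<ge> 0 \<longrightarrow> mu0 \<le> muh a + r1 a + delta a \<and> muh a + r1 a + delta a \<le> Cm + Cr + Cd"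
    using b muh_ge by eventually_elim auto
  have m: "(\<lambda>u. muh u + r1 u + delta u) \<in> borel_measurable borel" by measurable
  from int_lower[OF m ae assms] have "mu0 * s \<le> (LBINT u:{x..x+s}. muh u + r1 u + delta u)" .
  then show ?thesis unfolding Gam_def by auto
qed

lemma s0h_bnd: assumes "a \<ge> 0"
  shows "0 < s0h Lh muh a \<and> s0h Lh muh a \<le> Lh * exp (- mu0 * a)"
proof -
  obtain Bh Bv Cm Cr Cd where b: "AE a in lborel. a \<ge> 0 \<longrightarrow> 0 \<le> muh a \<and> muh a \<le> Cm"
     by (rule bnds)
  have "AE a in lborel. a \<ge> 0 \<longrightarrow> mu0 \<le> muh a \<and> muh a \<le> Cm"
    using b muh_ge by eventually_elim auto
  from int_lower[OF meas(3) this order_refl assms] have "mu0 * a \<le> (LBINT u:{0..a}. muh u)"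
    by simp
  then show ?thesis unfolding s0h_def using Lh by auto
qed

definition c :: "real \<Rightarrow> real" where "c a = betav a * s0h Lh muh a / muv"

lemma c_meas[measurable]: "c \<in> borel_measurable borel"
  unfolding c_def[abs_def] by measurable

lemma c_int: "set_integrable lborel {0..} (\<lambda>a. complex_of_real (c a))"
proof -
  obtain Bh Bv Cm Cr Cd where b: "AE a in lborel. a \<ge> 0 \<longrightarrow> 0 \<le> betav a \<and> betav a \<le> Bv"
     by (rule bnds)
  have "set_integrable lborel {0..} (\<lambda>a. (Bv * Lh / muv) * exp (- mu0 * a))"
    using exp_integrable[OF mu0] by (rule set_integrable_mult_right)
  then show ?thesis
  proof (rule set_integrable_bound)
    show "set_borel_measurable lborel {0..} (\<lambda>a. complex_of_real (c a))"
      unfolding set_borel_measurable_def by measurable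
    show "AE x in lborel. x \<in> {0..} \<longrightarrow> norm (complex_of_real (c x)) \<le> norm (Bv * Lh / muv * exp (- mu0 * x))"
      using b
    proof eventually_elim
      case (elim x)
      show ?case
      proof
        assume x: "x \<in> {0..}"
        with elim have bv: "0 \<le> betav x" "betav x \<le> Bv" by auto
        from s0h_bnd[of x] x have s: "0 < s0h Lh muh x" "s0h Lh muh x \<le> Lh * exp (- mu0 * x)" by auto
        have "\<bar>c x\<bar> = betav x * s0h Lh muh x / muv" using bv s muv by (simp add: c_def)
        also have "\<dots> \<le> Bv * (Lh * exp (- mu0 * x)) / muv"
          using bv s muv by (intro divide_right_mono mult_mono) auto
        also have "\<dots> = Bv * Lh / muv * exp (- mu0 * x)" by simp
        also have "\<dots> \<le> norm (Bv * Lh / muv * exp (- mu0 * x))" unfolding real_norm_def by (rule abs_ge_self)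
        finally show "norm (complex_of_real (c x)) \<le> norm (Bv * Lh / muv * exp (- mu0 * x))"
          by simp
      qed
    qed
  qed
qed

end


context mal begin

definition Phi :: "(real \<Rightarrow> complex) \<Rightarrow> complex" where
  "Phi f = (LINT s:{0..}|lborel. LINT xi:{0..}|lborel.
           complex_of_real (betah (xi + s) * Gam muh r1 delta xi s) * f xi)"

lemma Phi_mult: "Phi (\<lambda>x. a * f x) = a * Phi f"
proof -
  have "Phi (\<lambda>x. a * f x) = (LINT s:{0..}|lborel. a * (LINT xi:{0..}|lborel.
           complex_of_real (betah (xi + s) * Gam muh r1 delta xi s) * f xi))"
    unfolding Phi_def by (simp add: mult.left_commute)
  then show ?thesis unfolding Phi_def by simp
qed

lemma ind_mult: "indicator A x *\<^sub>R (b * f x) = (b::complex) * (indicator A x *\<^sub>R f x)"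
  by (simp split: split_indicator)

lemma inner_int:
  assumes f: "set_integrable lborel {0..} f"
  shows "\<exists>B. \<forall>s\<ge>0. set_integrable lborel {0..} (\<lambda>xi. complex_of_real (betah (xi + s) * Gam muh r1 delta xi s) * f xi)
     \<and> norm (LINT xi:{0..}|lborel. complex_of_real (betah (xi + s) * Gam muh r1 delta xi s) * f xi)
        \<le> B * exp (- mu0 * s)"
proof -
  obtain Bh Bv Cm Cr Cd where b: "AE a in lborel. a \<ge> 0 \<longrightarrow> 0 \<le> betah a \<and> betah a \<le> Bh"
     by (rule bnds)
  define N where "N = (LINT xi:{0..}|lborel. norm (f xi))"
  have phim[measurable]: "(\<lambda>x. indicator {0..} x *\<^sub>R f x) \<in> borel_measurable borel"
    using f unfolding set_integrable_def by (simp add: borel_measurable_integrable)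
  have fn: "set_integrable lborel {0..} (\<lambda>x. norm (f x))" using f by (rule set_integrable_norm)
  show ?thesis
  proof (intro exI allI impI conjI)
    fix s :: real assume s: "s \<ge> 0"
    have ae: "AE xi in lborel. xi \<in> {0..} \<longrightarrow> norm (complex_of_real (betah (xi + s) * Gam muh r1 delta xi s) * f xi)
          \<le> norm (complex_of_real (Bh * exp (- mu0 * s)) * f xi)"
      using AE_shift[OF b, of s]
    proof eventually_elim
      case (elim x)
      show ?case
      proof
        assume x: "x \<in> {0..}"
        with elim s have bh: "0 \<le> betah (x + s)" "betah (x + s) \<le> Bh" by auto
        from G_bnd[of x s] x s have g: "0 < Gam muh r1 delta x s" "Gam muh r1 delta x s \<le> exp (- mu0 * s)" by auto
        have "\<bar>betah (x + s) * Gam muh r1 delta x s\<bar> = betah (x + s) * Gam muh r1 delta x s"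
          using bh g by simp
        also have "\<dots> \<le> Bh * exp (- mu0 * s)" using bh g by (intro mult_mono) auto
        also have "\<dots> \<le> \<bar>Bh * exp (- mu0 * s)\<bar>" by (rule abs_ge_self)
        finally show "norm (complex_of_real (betah (x + s) * Gam muh r1 delta x s) * f x)
          \<le> norm (complex_of_real (Bh * exp (- mu0 * s)) * f x)"
          unfolding norm_mult norm_of_real by (intro mult_right_mono) auto
      qed
    qed
    have i: "set_integrable lborel {0..} (\<lambda>xi. complex_of_real (betah (xi + s) * Gam muh r1 delta xi s) * f xi)"
    proof (rule set_integrable_bound[OF _ _ ae])
      show "set_integrable lborel {0..} (\<lambda>x. complex_of_real (Bh * exp (- mu0 * s)) * f x)"
        using f by (rule set_integrable_mult_right)
      show "set_borel_measurable lborel {0..} (\<lambda>xi. complex_of_real (betah (xi + s) * Gam muh r1 delta xi s) * f xi)"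
        unfolding set_borel_measurable_def ind_mult by measurable
    qed
    then show "set_integrable lborel {0..} (\<lambda>xi. complex_of_real (betah (xi + s) * Gam muh r1 delta xi s) * f xi)" .
    have "norm (LINT xi:{0..}|lborel. complex_of_real (betah (xi + s) * Gam muh r1 delta xi s) * f xi)
       \<le> (LINT xi:{0..}|lborel. norm (complex_of_real (betah (xi + s) * Gam muh r1 delta xi s) * f xi))"
      by (rule set_integral_norm_bound[OF i])
    also have "\<dots> \<le> (LINT xi:{0..}|lborel. norm (complex_of_real (Bh * exp (- mu0 * s)) * f xi))"
      apply (rule set_integral_mono_AE)
        apply (rule set_integrable_norm[OF i])
       apply (rule set_integrable_norm) apply (rule set_integrable_mult_right) apply (rule f)
      using ae by (auto elim!: eventually_mono)
    also have "\<dots> = \<bar>Bh\<bar> * N * exp (- mu0 * s)"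
      unfolding norm_mult norm_of_real N_def by (simp add: abs_mult)
    finally show "norm (LINT xi:{0..}|lborel. complex_of_real (betah (xi + s) * Gam muh r1 delta xi s) * f xi)
       \<le> (\<bar>Bh\<bar> * N) * exp (- mu0 * s)" .
  qed
qed

end


context mal begin

lemma outer_int:
  assumes f: "set_integrable lborel {0..} f"
  shows "set_integrable lborel {0..} (\<lambda>s. LINT xi:{0..}|lborel.
           complex_of_real (betah (xi + s) * Gam muh r1 delta xi s) * f xi)"
proof -
  obtain B where B: "\<And>s. s \<ge> 0 \<Longrightarrow> norm (LINT xi:{0..}|lborel. complex_of_real (betah (xi + s) * Gam muh r1 delta xi s) * f xi)
        \<le> B * exp (- mu0 * s)" using inner_int[OF f] by blast
  have phim[measurable]: "(\<lambda>x. indicator {0..} x *\<^sub>R f x) \<in> borel_measurable borel"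
    using f unfolding set_integrable_def by (simp add: borel_measurable_integrable)
  show ?thesis
  proof (rule set_integrable_bound)
    show "set_integrable lborel {0..} (\<lambda>s. B * exp (- mu0 * s))"
      using exp_integrable[OF mu0] by (rule set_integrable_mult_right)
    show "set_borel_measurable lborel {0..} (\<lambda>s. LINT xi:{0..}|lborel.
           complex_of_real (betah (xi + s) * Gam muh r1 delta xi s) * f xi)"
      unfolding set_borel_measurable_def set_lebesgue_integral_def ind_mult by measurable
    show "AE s in lborel. s \<in> {0..} \<longrightarrow> norm (LINT xi:{0..}|lborel.
           complex_of_real (betah (xi + s) * Gam muh r1 delta xi s) * f xi) \<le> norm (B * exp (- mu0 * s))"
    proof (rule AE_I2, rule impI)
      fix s :: real assume "s \<in> {0..}"
      then have "norm (LINT xi:{0..}|lborel. complex_of_real (betah (xi + s) * Gam muh r1 delta xi s) * f xi)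
        \<le> B * exp (- mu0 * s)" using B by auto
      also have "\<dots> \<le> norm (B * exp (- mu0 * s))" unfolding real_norm_def by (rule abs_ge_self)
      finally show "norm (LINT xi:{0..}|lborel. complex_of_real (betah (xi + s) * Gam muh r1 delta xi s) * f xi)
        \<le> norm (B * exp (- mu0 * s))" .
    qed
  qed
qed

lemma Phi_add:
  assumes f: "set_integrable lborel {0..} f" and g: "set_integrable lborel {0..} g"
  shows "Phi (\<lambda>x. f x + g x) = Phi f + Phi g"
proof -
  obtain Bf where Bf: "\<And>s. s \<ge> 0 \<Longrightarrow> set_integrable lborel {0..} (\<lambda>xi. complex_of_real (betah (xi + s) * Gam muh r1 delta xi s) * f xi)"
    using inner_int[OF f] by blast
  obtain Bg where Bg: "\<And>s. s \<ge> 0 \<Longrightarrow> set_integrable lborel {0..} (\<lambda>xi. complex_of_real (betah (xi + s) * Gam muh r1 delta xi s) * g xi)"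
    using inner_int[OF g] by blast
  have "Phi (\<lambda>x. f x + g x) = (LINT s:{0..}|lborel. (LINT xi:{0..}|lborel.
           complex_of_real (betah (xi + s) * Gam muh r1 delta xi s) * f xi) + (LINT xi:{0..}|lborel.
           complex_of_real (betah (xi + s) * Gam muh r1 delta xi s) * g xi))"
    unfolding Phi_def
    apply (rule set_lebesgue_integral_cong)
     apply simp
    apply (intro allI impI)
    apply (subst set_integral_add(2)[symmetric])
      apply (rule Bf) apply simp
     apply (rule Bg) apply simp
    apply (simp add: distrib_left)
    done
  also have "\<dots> = Phi f + Phi g"
    unfolding Phi_def by (rule set_integral_add(2)[OF outer_int[OF f] outer_int[OF g]])
  finally show ?thesis .
qed

lemma Phi_cong:
  assumes f: "set_integrable lborel {0..} f" and g: "set_integrable lborel {0..} g"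
    and ae: "AE x in lborel. x \<ge> 0 \<longrightarrow> f x = g x"
  shows "Phi f = Phi g"
proof -
  define F where "F = (\<lambda>x. indicator {0..} x *\<^sub>R f x)"
  define G where "G = (\<lambda>x. indicator {0..} x *\<^sub>R g x)"
  have fm[measurable]: "F \<in> borel_measurable borel"
    using f unfolding set_integrable_def F_def by (simp add: borel_measurable_integrable)
  have gm[measurable]: "G \<in> borel_measurable borel"
    using g unfolding set_integrable_def G_def by (simp add: borel_measurable_integrable)
  have eqs: "\<And>b x. indicator {0..} x *\<^sub>R (b * f x) = b * F x" "\<And>b x. indicator {0..} x *\<^sub>R (b * g x) = b * G x"
    unfolding F_def G_def by (rule ind_mult)+
  have aeFG: "AE x in lborel. F x = G x"
    using ae unfolding F_def G_def by eventually_elim (auto simp add: indicator_def)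
  have "\<And>s. (LINT xi:{0..}|lborel. complex_of_real (betah (xi + s) * Gam muh r1 delta xi s) * f xi)
     = (LINT xi:{0..}|lborel. complex_of_real (betah (xi + s) * Gam muh r1 delta xi s) * g xi)"
    unfolding set_lebesgue_integral_def eqs
    apply (rule integral_cong_AE)
      apply measurable
    using aeFG by (auto elim!: eventually_mono)
  then show ?thesis unfolding Phi_def by simp
qed

end


context mal begin

definition I where "I = (LBINT s:{0..}. LBINT xi:{0..}. betah (xi + s) * betav xi * s0h Lh muh xi * Gam muh r1 delta xi s)"
definition X where "X = (Lv / muv) / muv * I"

lemma Phi_c: "Phi (\<lambda>a. complex_of_real (c a)) = complex_of_real (I / muv)"
proof -
  have 1: "(LINT xi:{0..}|lborel. complex_of_real (betah (xi + s) * Gam muh r1 delta xi s) * complex_of_real (c xi))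
     = complex_of_real ((LBINT xi:{0..}. betah (xi + s) * betav xi * s0h Lh muh xi * Gam muh r1 delta xi s) / muv)" for s
  proof -
    have "(LINT xi:{0..}|lborel. complex_of_real (betah (xi + s) * Gam muh r1 delta xi s) * complex_of_real (c xi))
      = (LINT xi:{0..}|lborel. complex_of_real ((betah (xi + s) * betav xi * s0h Lh muh xi * Gam muh r1 delta xi s) / muv))"
    proof -
      have eq: "betah (xi + s) * Gam muh r1 delta xi s * c xi = (betah (xi + s) * betav xi * s0h Lh muh xi * Gam muh r1 delta xi s) / muv" for xi
        unfolding c_def by (simp add: field_simps)
      show ?thesis by (simp only: of_real_mult[symmetric] eq)
    qed
    also have "\<dots> = complex_of_real (LBINT xi:{0..}. (betah (xi + s) * betav xi * s0h Lh muh xi * Gam muh r1 delta xi s) / muv)"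
      by (rule set_integral_complex_of_real)
    finally show ?thesis by simp
  qed
  have "Phi (\<lambda>a. complex_of_real (c a)) = (LINT s:{0..}|lborel. complex_of_real ((LBINT xi:{0..}. betah (xi + s) * betav xi * s0h Lh muh xi * Gam muh r1 delta xi s) / muv))"
    unfolding Phi_def 1 ..
  also have "\<dots> = complex_of_real (LBINT s:{0..}. (LBINT xi:{0..}. betah (xi + s) * betav xi * s0h Lh muh xi * Gam muh r1 delta xi s) / muv)"
    by (rule set_integral_complex_of_real)
  finally show ?thesis unfolding I_def by simp
qed

lemma KPhi_c: "complex_of_real (Lv / muv) * Phi (\<lambda>a. complex_of_real (c a)) = complex_of_real X"
  unfolding Phi_c X_def by simp

lemma I_nonneg: "I \<ge> 0"
proof -
  obtain Bh Bv Cm Cr Cd where b: "AE a in lborel. a \<ge> 0 \<longrightarrow> 0 \<le> betah a \<and> betah a \<le> Bh"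
    "AE a in lborel. a \<ge> 0 \<longrightarrow> 0 \<le> betav a \<and> betav a \<le> Bv"
     by (rule bnds)
  have inner: "0 \<le> (LBINT xi:{0..}. betah (xi + s) * betav xi * s0h Lh muh xi * Gam muh r1 delta xi s)" if s: "s \<ge> 0" for s
    unfolding set_lebesgue_integral_def
  proof (rule integral_nonneg_AE)
    show "AE x in lborel. 0 \<le> indicator {0..} x *\<^sub>R (betah (x + s) * betav x * s0h Lh muh x * Gam muh r1 delta x s)"
      using AE_shift[OF b(1), of s] b(2)
    proof eventually_elim
      case (elim x)
      show ?case
      proof (cases "x \<ge> 0")
        case True
        with elim s have "0 \<le> betah (x + s)" "0 \<le> betav x" by auto
        moreover have "0 < s0h Lh muh x" "0 < Gam muh r1 delta x s" using s0h_bnd G_bnd True s by auto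
        ultimately show ?thesis by simp
      qed simp
    qed
  qed
  show ?thesis unfolding I_def set_lebesgue_integral_def
    apply (rule integral_nonneg_AE, rule AE_I2)
    subgoal for x using inner[of x, unfolded set_lebesgue_integral_def] by (cases "x \<ge> 0") auto
    done
qed

lemma X_nonneg: "X \<ge> 0" unfolding X_def using I_nonneg Lv muv by simp

end


context mal begin

abbreviation "K \<equiv> next_gen_op Lh Lv muv muh betah betav r1 delta"

lemma K_fst: "fst (K p) = (\<lambda>a. complex_of_real (c a) * snd p)"
  by (simp add: next_gen_op_def c_def)

lemma K_snd: "snd (K p) = complex_of_real (Lv / muv) * Phi (fst p)"
  by (simp add: next_gen_op_def Phi_def)

lemma betav_not_ae0: "\<not> (AE a in lborel. a \<ge> 0 \<longrightarrow> betav a = 0)"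
proof
  assume ae: "AE a in lborel. a \<ge> 0 \<longrightarrow> betav a = 0"
  have "(LBINT a:{0..}. betah (a + s) * betav a * exp (- mu0 * (a + s))) = 0" for s
    unfolding set_lebesgue_integral_def
    by (rule integral_eq_zero_AE) (use ae in \<open>auto elim!: eventually_mono split: split_indicator\<close>)
  then have "(LBINT s:{0..}. LBINT a:{0..}. betah (a + s) * betav a * exp (- mu0 * (a + s))) = 0"
    by simp
  with posint show False by simp
qed

lemma eig: "in_spectrum K (complex_of_real (sqrt X))"
proof -
  define l where "l = complex_of_real (sqrt X)"
  define p0 where "p0 = ((\<lambda>a. complex_of_real (c a)), l)"
  have p0: "p0 \<in> L1R" unfolding p0_def L1R_def using c_int by simp
  have "sqrt X * sqrt X = X" using X_nonneg by simp
  then have ll: "l * l = complex_of_real X" unfolding l_def of_real_mult[symmetric] by simp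
  have sh: "L1R_eq (shift_op l K p0) ((\<lambda>_. 0), 0)"
  proof -
    have "fst (shift_op l K p0) = (\<lambda>x. 0)"
      unfolding shift_op_def K_fst p0_def by (simp add: mult.commute)
    moreover have "snd (shift_op l K p0) = 0"
      unfolding shift_op_def K_snd p0_def fst_conv snd_conv ll KPhi_c by simp
    ultimately show ?thesis unfolding L1R_eq_def by simp
  qed
  have n0: "\<not> L1R_eq p0 ((\<lambda>_. 0), 0)"
  proof
    assume "L1R_eq p0 ((\<lambda>_. 0), 0)"
    then have ae: "AE x in lborel. x \<ge> 0 \<longrightarrow> c x = 0" unfolding L1R_eq_def p0_def by simp
    have "AE x in lborel. x \<ge> 0 \<longrightarrow> betav x = 0"
      using ae
    proof eventually_elim
      case (elim x)
      show ?case
      proof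
        assume x: "x \<ge> 0"
        with elim have "betav x * s0h Lh muh x / muv = 0" by (simp add: c_def)
        moreover have "s0h Lh muh x > 0" using s0h_bnd x by auto
        ultimately show "betav x = 0" using muv by simp
      qed
    qed
    with betav_not_ae0 show False by simp
  qed
  have "\<not> (\<forall>p\<in>L1R. L1R_eq (shift_op l K p) ((\<lambda>_. 0), 0) \<longrightarrow> L1R_eq p ((\<lambda>_. 0), 0))"
    using p0 sh n0 by blast
  then show ?thesis unfolding in_spectrum_def l_def[symmetric] by blast
qed

lemma notin: assumes l: "cmod l > sqrt X" shows "\<not> in_spectrum K l"
proof -
  have l0: "l \<noteq> 0" using l X_nonneg by auto
  have "cmod (l * l) > X"
  proof -
    have "X = sqrt X * sqrt X" using X_nonneg by simp
    also have "\<dots> < cmod l * cmod l" using l X_nonneg by (intro mult_strict_mono) auto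
    finally show ?thesis by (simp add: norm_mult)
  qed
  then have lX: "l * l - complex_of_real X \<noteq> 0" using X_nonneg by auto
  have inj: "\<forall>p\<in>L1R. L1R_eq (shift_op l K p) ((\<lambda>_. 0), 0) \<longrightarrow> L1R_eq p ((\<lambda>_. 0), 0)"
  proof (intro ballI impI)
    fix p assume p: "p \<in> L1R" and sh: "L1R_eq (shift_op l K p) ((\<lambda>_. 0), 0)"
    obtain B1 B2 where pe: "p = (B1, B2)" by (cases p)
    from p have B1: "set_integrable lborel {0..} B1" unfolding pe L1R_def by simp
    from sh have a1: "AE x in lborel. x \<ge> 0 \<longrightarrow> l * B1 x - complex_of_real (c x) * B2 = 0"
      and a2: "l * B2 - complex_of_real (Lv / muv) * Phi B1 = 0"
      unfolding L1R_eq_def shift_op_def K_fst K_snd pe by auto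
    have a1': "AE x in lborel. x \<ge> 0 \<longrightarrow> B1 x = (B2 / l) * complex_of_real (c x)"
      using a1
    proof eventually_elim
      case (elim x)
      show ?case
      proof
        assume "x \<ge> 0"
        with elim have "l * B1 x = complex_of_real (c x) * B2" by simp
        then have "B1 x = complex_of_real (c x) * B2 / l" using l0 by (simp add: eq_divide_eq mult.commute)
        then show "B1 x = B2 / l * complex_of_real (c x)" by simp
      qed
    qed
    have "Phi B1 = Phi (\<lambda>x. (B2 / l) * complex_of_real (c x))"
      by (rule Phi_cong[OF B1 _ a1']) (use c_int in simp)
    also have "\<dots> = (B2 / l) * Phi (\<lambda>x. complex_of_real (c x))" by (rule Phi_mult)
    finally have "complex_of_real (Lv / muv) * Phi B1 = (B2 / l) * complex_of_real X"
      using KPhi_c by (simp add: mult_ac)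
    with a2 have "l * B2 = (B2 / l) * complex_of_real X" by simp
    then have "l * (l * B2) = l * (B2 / l * complex_of_real X)" by simp
    also have "\<dots> = B2 * complex_of_real X" using l0 by simp
    finally have e: "l * (l * B2) = B2 * complex_of_real X" .
    have "B2 * (l * l - complex_of_real X) = l * (l * B2) - B2 * complex_of_real X"
      by (simp add: algebra_simps)
    with e have "B2 * (l * l - complex_of_real X) = 0" by simp
    with lX have B20: "B2 = 0" by simp
    have "AE x in lborel. x \<ge> 0 \<longrightarrow> B1 x = 0" using a1' by eventually_elim (simp add: B20)
    then show "L1R_eq p ((\<lambda>_. 0), 0)" unfolding L1R_eq_def pe using B20 by simp
  qed
  have surj: "\<forall>g\<in>L1R. \<exists>p\<in>L1R. L1R_eq (shift_op l K p) g"
  proof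
    fix g assume g: "g \<in> L1R"
    obtain g1 g2 where ge: "g = (g1, g2)" by (cases g)
    from g have g1: "set_integrable lborel {0..} g1" unfolding ge L1R_def by simp
    define a where "a = complex_of_real (Lv / muv) * Phi g1"
    define B2 where "B2 = (l * g2 + a) / (l * l - complex_of_real X)"
    define B1 where "B1 = (\<lambda>x. (1 / l) * g1 x + (B2 / l) * complex_of_real (c x))"
    have i1: "set_integrable lborel {0..} (\<lambda>x. (1 / l) * g1 x)" using g1 by (rule set_integrable_mult_right)
    have i2: "set_integrable lborel {0..} (\<lambda>x. (B2 / l) * complex_of_real (c x))" using c_int by (rule set_integrable_mult_right)
    have B1i: "set_integrable lborel {0..} B1" unfolding B1_def using i1 i2 by (rule set_integral_add(1))
    have "Phi B1 = Phi (\<lambda>x. (1 / l) * g1 x) + Phi (\<lambda>x. (B2 / l) * complex_of_real (c x))"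
      unfolding B1_def by (rule Phi_add[OF i1 i2])
    also have "\<dots> = (1 / l) * Phi g1 + (B2 / l) * Phi (\<lambda>x. complex_of_real (c x))"
      by (simp only: Phi_mult)
    finally have "complex_of_real (Lv / muv) * Phi B1 = (1 / l) * a + (B2 / l) * complex_of_real X"
      using KPhi_c unfolding a_def by (simp add: algebra_simps)
    then have s2: "l * B2 - complex_of_real (Lv / muv) * Phi B1 = g2"
          proof -
      have e: "B2 * (l * l - complex_of_real X) = l * g2 + a" unfolding B2_def using lX by simp
      have "l * B2 - ((1 / l) * a + (B2 / l) * complex_of_real X) = (B2 * (l * l - complex_of_real X) - a) / l"
        using l0 by (simp add: field_simps)
      also have "\<dots> = g2" unfolding e using l0 by simp
      finally show ?thesis using \<open>complex_of_real (Lv / muv) * Phi B1 = (1 / l) * a + (B2 / l) * complex_of_real X\<close> by simp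
    qed
    have s1: "l * B1 x - complex_of_real (c x) * B2 = g1 x" for x
    proof -
      have "l * B1 x = g1 x + B2 * complex_of_real (c x)" unfolding B1_def using l0 by (simp add: distrib_left)
      then show ?thesis by (simp add: mult.commute)
    qed
    have "(B1, B2) \<in> L1R" unfolding L1R_def using B1i by simp
    moreover have "L1R_eq (shift_op l K (B1, B2)) g"
      unfolding L1R_eq_def shift_op_def K_fst K_snd ge using s1 s2 by simp
    ultimately show "\<exists>p\<in>L1R. L1R_eq (shift_op l K p) g" by blast
  qed
  show ?thesis unfolding in_spectrum_def using inj surj by blast
qed

lemma spec_rad: "spectral_radius K = sqrt X"
  unfolding spectral_radius_def
proof (rule cSup_eq_maximum)
  show "sqrt X \<in> cmod ` {l. in_spectrum K l}"
    using eig X_nonneg by (intro image_eqI[of _ _ "complex_of_real (sqrt X)"]) auto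
  show "y \<le> sqrt X" if "y \<in> cmod ` {l. in_spectrum K l}" for y
  proof -
    from that obtain l where "y = cmod l" "in_spectrum K l" by auto
    then show ?thesis using notin[of l] by (cases "cmod l > sqrt X") auto
  qed
qed

end

theorem theorem3p2:
  fixes Lh Lv muv mu0 :: real
    and muh betah betav delta r1 r2 :: "real \<Rightarrow> real"
  assumes "mu0 > 0"
    and "AE a in lborel. a \<ge> 0 \<longrightarrow> muh a \<ge> mu0"
    and "muv \<ge> mu0"
    and "Lh > 0" and "Lv > 0" and "muv > 0"
    and "Linf_plus betav" and "Linf_plus betah" and "Linf_plus muh"
    and "Linf_plus delta" and "Linf_plus r1" and "Linf_plus r2"
    and "(LBINT s:{0..}. LBINT a:{0..}. betah (a + s) * betav a * exp (- mu0 * (a + s))) > 0"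
  shows "spectral_radius (next_gen_op Lh Lv muv muh betah betav r1 delta)
           = R0 Lh Lv muv muh betah betav r1 delta"
proof -
  interpret mal Lh Lv muv mu0 muh betah betav delta r1
    using assms by unfold_locales auto
  show ?thesis using spec_rad unfolding R0_def X_def I_def by simp
qed

end
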